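(* Let $q\ge2$ be an integer, $\mu>0$, and let $\hat Q_\ell$ ($\ell=1,\dots,q-1$) and $\hat P$ be the $q\times q$ matrices defined in the context. Then for every $t\in\mathbb N$ and all $\ell\neq\ell'$ in $\{1,\dots,q-1\}$: $$\det(\hat I+t\hat P)=1-\mu t(t+1)\frac{q}{q-1},$$ $$\det(\hat I+t\hat Q_\ell)=1-\mu t(t-1)\frac{q-2}{q-1}-t^2\mu^2\frac{q(q-2)}{(q-1)^2},$$ $$\det(\hat I+\hat P+\hat Q_\ell)=1-\mu\frac{2q}{q-1}-\mu^2\frac{4q(q-2)}{(q-1)^2},$$ $$\det(\hat I+\hat Q_\ell+\hat Q_{\ell'})=1+\mu\frac{2}{q-1}-\mu^2\frac{(3q-1)(q-3)}{(q-1)^2}-\mu^3\frac{2q(q-3)}{(q-1)^2}.$$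
   Context: For $m=1,\dots,q-2$ and $l=1,\dots,q$: $\alpha_{m,l}=\frac{1}{\sqrt{m(m+1)}}$ if $l\le m$, $\alpha_{m,l}=\frac{-m}{\sqrt{m(m+1)}}$ if $l=m+1$, $\alpha_{m,l}=0$ if $l>m+1$. For $m=1,\dots,q$ set $\omega_{m,l}=\alpha_{m,l}$ if $m\le q-2$ and $\omega_{m,l}=0$ otherwise. For $m,m'\in\{1,\dots,q\}$: $$(\hat Q_l)_{mm'}=\mu\,\omega_{m,l}\omega_{m',l}+\sqrt\mu\sqrt{1+\mu\tfrac{q}{q-1}}\,\big[\omega_{m,l}\delta_{m',q-1}+\omega_{m',l}\delta_{m,q-1}\big],$$ and, with $c=\mu\frac{q}{q-1}$, $\hat P_{mm'}=(1+c)^{-1}\times\{c$ if $m=m'=q$; $-c(2+c)$ if $m=m'=q-1$; $\sqrt\mu\sqrt{q/(q-1)}$ if $\{m,m'\}=\{q-1,q\}$; $0$ otherwise$\}$. $\hat I$ is the $q\times q$ identity. *)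

theory Defs
  imports "Jordan_Normal_Form.Determinant"
begin

text \<open>Entries use the paper's 1-based indices m, l in 1..q; the q x q matrices
  (Jordan_Normal_Form, 0-based) have entry (i,j) equal to the paper's entry (i+1,j+1).\<close>

definition alpha :: "nat \<Rightarrow> nat \<Rightarrow> nat \<Rightarrow> real" where
  "alpha q m l = (if l \<le> m then 1 / sqrt (real m * (real m + 1))
                  else if l = m + 1 then - real m / sqrt (real m * (real m + 1))
                  else 0)"

definition omega :: "nat \<Rightarrow> nat \<Rightarrow> nat \<Rightarrow> real" where
  "omega q m l = (if 1 \<le> m \<and> m \<le> q - 2 then alpha q m l else 0)"

definition kron :: "nat \<Rightarrow> nat \<Rightarrow> real" where
  "kron a b = (if a = b then 1 else 0)"

definition Qhat_entry :: "nat \<Rightarrow> real \<Rightarrow> nat \<Rightarrow> nat \<Rightarrow> nat \<Rightarrow> real" where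
  "Qhat_entry q \<mu> l m m' =
     \<mu> * omega q m l * omega q m' l
     + sqrt \<mu> * sqrt (1 + \<mu> * (real q / (real q - 1)))
       * (omega q m l * kron m' (q - 1) + omega q m' l * kron m (q - 1))"

definition Phat_entry :: "nat \<Rightarrow> real \<Rightarrow> nat \<Rightarrow> nat \<Rightarrow> real" where
  "Phat_entry q \<mu> m m' =
     (let c = \<mu> * (real q / (real q - 1)) in
      (1 / (1 + c)) *
      (if m = q \<and> m' = q then c
       else if m = q - 1 \<and> m' = q - 1 then - c * (2 + c)
       else if (m = q - 1 \<and> m' = q) \<or> (m = q \<and> m' = q - 1)
         then sqrt \<mu> * sqrt (real q / (real q - 1))
       else 0))"

definition Qhat :: "nat \<Rightarrow> real \<Rightarrow> nat \<Rightarrow> real mat" where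
  "Qhat q \<mu> l = mat q q (\<lambda>(i, j). Qhat_entry q \<mu> l (i + 1) (j + 1))"

definition Phat :: "nat \<Rightarrow> real \<Rightarrow> real mat" where
  "Phat q \<mu> = mat q q (\<lambda>(i, j). Phat_entry q \<mu> (i + 1) (j + 1))"

end

theory Submission
  imports Defs
begin

lemma det2: "det (mat 2 2 f) = f (0,0) * f (1,1) - f (0,1) * (f (1,0) :: 'a :: comm_ring_1)"
  apply (subst laplace_expansion_column[where j=0 and n=2])
  apply (auto simp: cofactor_def mat_delete_def numeral_2_eq_2 det_single insert_index_def)
  done

lemma det3: "det (mat 3 3 f) = (f (0,0) :: 'a :: comm_ring_1) * (f (1,1) * f (2,2) - f (1,2) * f (2,1))
   - f (1,0) * (f (0,1) * f (2,2) - f (0,2) * f (2,1)) + f (2,0) * (f (0,1) * f (1,2) - f(0,2) * f (1,1))"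
  apply (subst laplace_expansion_column[where j=0 and n=3])
  apply (auto simp: cofactor_def numeral_3_eq_3)
  apply (subst (1 2 3) laplace_expansion_column[where j=0 and n=2])
  apply (auto simp: cofactor_def mat_delete_def numeral_2_eq_2 det_single insert_index_def algebra_simps)
  done

lemma sylvester:
  fixes U :: "'a :: idom mat"
  assumes U: "U \<in> carrier_mat n r" and V: "V \<in> carrier_mat r n"
  shows "det (1\<^sub>m n + U * V) = det (1\<^sub>m r + V * U)"
proof -
  let ?M = "four_block_mat (1\<^sub>m n) (-U) V (1\<^sub>m r)"
  let ?L = "four_block_mat (1\<^sub>m n) (0\<^sub>m n r) V (1\<^sub>m r)"
  let ?R1 = "four_block_mat (1\<^sub>m n) (-U) (0\<^sub>m r n) (1\<^sub>m r + V * U)"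
  let ?L1 = "four_block_mat (1\<^sub>m n + U * V) (-U) (0\<^sub>m r n) (1\<^sub>m r)"
  have e1: "?M = ?L1 * ?L"
    apply (subst mult_four_block_mat[of _ n n _ r _ r _ _ n _ r])
    using U V by (auto simp: add_mult_distrib_mat)
  have e2: "?M = ?L * ?R1"
    apply (subst mult_four_block_mat[of _ n n _ r _ r _ _ n _ r])
    using U V by (auto simp: mult_add_distrib_mat)
  have dL: "det ?L = 1"
    by (subst det_four_block_mat_upper_right_zero[of _ n _ r], use V in auto)
  have d1: "det ?M = det (1\<^sub>m n + U * V)"
    unfolding e1 using U V
    by (subst det_mult[of _ "n+r"], auto simp: dL intro!: four_block_carrier_mat,
        subst det_four_block_mat_lower_left_zero[of _ n _ r], auto)
  have d2: "det ?M = det (1\<^sub>m r + V * U)"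
    unfolding e2 using U V
    by (subst det_mult[of _ "n+r"], auto simp: dL intro!: four_block_carrier_mat,
        subst det_four_block_mat_lower_left_zero[of _ n _ r], auto)
  show ?thesis using d1 d2 by simp
qed

lemma sqrt_frac: "x > 0 \<Longrightarrow> (a / sqrt x) * (b / sqrt x) = a * b / (x::real)"
  by (metis abs_of_pos real_sqrt_mult_self times_divide_times_eq)

lemma tele: "(y::real) > 0 \<Longrightarrow> 1 / y - 1 / (y + 1) = 1 / (y * (y + 1))"
  by (simp add: field_simps)

lemma F_sum: assumes "l \<ge> 1"
  shows "(\<Sum>m\<in>{1..n}. alpha q m l * alpha q m l) = (if n < l - 1 then 0 else 1 - 1 / (real n + 1))"
proof (induction n)
  case 0
  then show ?case using assms by auto
next
  case (Suc n)
  have s: "{1..Suc n} = insert (Suc n) {1..n}" by auto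
  have d: "real n + 1 \<noteq> 0" "real n + 2 \<noteq> 0" "(real n + 1) * (real n + 2) > 0" "2 + (real n * real n + real n * 3) \<noteq> 0" 
    by auto (smt (verit) of_nat_0_le_iff zero_le_mult_iff)
  have a: "alpha q (Suc n) l * alpha q (Suc n) l =
     (if l \<le> Suc n then 1 / ((real n + 1) * (real n + 2)) else if l = Suc n + 1 then (real n + 1) / (real n + 2) else 0)"
    using d unfolding alpha_def by (auto simp: sqrt_frac) (auto simp: field_simps)
  have e: "(\<Sum>m\<in>{1..Suc n}. alpha q m l * alpha q m l) = (\<Sum>m\<in>{1..n}. alpha q m l * alpha q m l) + alpha q (Suc n) l * alpha q (Suc n) l"
    unfolding s by (subst sum.insert, auto)
  have x1: "1 - 1 / (real n + 1) + 1 / ((real n + 1) * (real n + 2)) = 1 - 1 / (real n + 2)"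
    using tele[of "real n + 1"] by (simp add: add.assoc)
  have x2: "(real n + 1) / (real n + 2) = 1 - 1 / (real n + 2)"
    using d by (simp add: field_simps)
  show ?case unfolding e a Suc.IH using assms x1 x2
    by (auto simp: add.commute)
qed

lemma G_sum: assumes "l \<ge> 1" "l < l'"
  shows "(\<Sum>m\<in>{1..n}. alpha q m l * alpha q m l') = (if n < l' - 1 then 0 else - 1 / (real n + 1))"
proof (induction n)
  case 0
  then show ?case using assms by auto
next
  case (Suc n)
  have s: "{1..Suc n} = insert (Suc n) {1..n}" by auto
  have d: "real n + 1 \<noteq> 0" "real n + 2 \<noteq> 0" "(real n + 1) * (real n + 2) > 0" "2 + (real n * real n + real n * 3) \<noteq> 0" 
    by auto (smt (verit) of_nat_0_le_iff zero_le_mult_iff)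
  have a: "alpha q (Suc n) l * alpha q (Suc n) l' =
     (if l' \<le> Suc n then 1 / ((real n + 1) * (real n + 2)) else if l' = Suc n + 1 then - 1 / (real n + 2) else 0)"
    using d unfolding alpha_def using assms by (auto simp: sqrt_frac) (auto simp: field_simps)
  have e: "(\<Sum>m\<in>{1..Suc n}. alpha q m l * alpha q m l') = (\<Sum>m\<in>{1..n}. alpha q m l * alpha q m l') + alpha q (Suc n) l * alpha q (Suc n) l'"
    unfolding s by (subst sum.insert, auto)
  have x1: "- 1 / (real n + 1) + 1 / ((real n + 1) * (real n + 2)) = - 1 / (real n + 2)"
    using tele[of "real n + 1"] by (simp add: add.assoc)
  show ?case unfolding e a Suc.IH using assms x1
    by (auto simp: add.commute)
qed

lemma omega_sum: assumes "q \<ge> 2"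
  shows "(\<Sum>i<q. omega q (i+1) l * omega q (i+1) l') = (\<Sum>m\<in>{1..q-2}. alpha q m l * alpha q m l')"
proof -
  have "(\<Sum>i<q. omega q (i+1) l * omega q (i+1) l') = (\<Sum>m\<in>{1..q}. omega q m l * omega q m l')"
    by (rule sum.reindex_bij_witness[of _ "\<lambda>m. m - 1" "\<lambda>i. i + 1"], auto)
  also have "\<dots> = (\<Sum>m\<in>{1..q-2}. omega q m l * omega q m l')"
    by (rule sum.mono_neutral_right, use assms in \<open>auto simp: omega_def\<close>)
  also have "\<dots> = (\<Sum>m\<in>{1..q-2}. alpha q m l * alpha q m l')"
    by (rule sum.cong, auto simp: omega_def)
  finally show ?thesis .
qed

lemma ww: assumes "q \<ge> 2" "1 \<le> l" "l \<le> q - 1"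
  shows "(\<Sum>i<q. omega q (i+1) l * omega q (i+1) l) = (real q - 2) / (real q - 1)"
  unfolding omega_sum[OF assms(1)] F_sum[OF assms(2)] using assms
  by (auto simp: field_simps of_nat_diff)

lemma ww': assumes "q \<ge> 2" "1 \<le> l" "l \<le> q - 1" "1 \<le> l'" "l' \<le> q - 1" "l \<noteq> l'"
  shows "(\<Sum>i<q. omega q (i+1) l * omega q (i+1) l') = - 1 / (real q - 1)"
proof (cases "l < l'")
  case True
  then show ?thesis unfolding omega_sum[OF assms(1)] G_sum[OF assms(2) True] using assms
    by (auto simp: field_simps of_nat_diff)
next
  case False
  then have "l' < l" using assms by auto
  then show ?thesis unfolding omega_sum[OF assms(1)] mult.commute[of "alpha q _ l"] G_sum[OF assms(4) \<open>l' < l\<close>] using assms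
    by (auto simp: field_simps of_nat_diff)
qed

lemma sum_delta_r: "(a::nat) < q \<Longrightarrow> (\<Sum>i<q. f i * (if i = a then 1 else 0)) = (f a::real)"
  by (simp add: if_distrib sum.delta' cong: if_cong)
lemma sum_delta_l: assumes "(a::nat) < q" shows "(\<Sum>i<q. (if i = a then 1 else 0) * f i) = (f a::real)"
  using assms proof -
  have "\<And>i. (if i = a then 1 else 0) * f i = (if i = a then f i else 0)" by simp
  then show ?thesis using assms by simp
qed
lemma sum_delta_r': "(a::nat) < q \<Longrightarrow> (\<Sum>i\<in>{0..<q}. f i * (if i = a then 1 else 0)) = (f a::real)"
  by (simp add: if_distrib sum.delta' cong: if_cong)
lemma sum_delta_l': assumes "(a::nat) < q" shows "(\<Sum>i\<in>{0..<q}. (if i = a then 1 else 0) * f i) = (f a::real)"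
  using assms proof -
  have "\<And>i. (if i = a then 1 else 0) * f i = (if i = a then f i else 0)" by simp
  then show ?thesis using assms by simp
qed

lemma Phat_zero: "m \<noteq> q - 1 \<and> m \<noteq> q \<or> m' \<noteq> q - 1 \<and> m' \<noteq> q \<Longrightarrow> Phat_entry q \<mu> m m' = 0"
  unfolding Phat_entry_def Let_def by auto

lemma frac_comb: "x / k * (y / k) - z / (k * k) = (x * y - z) / (k * (k::real))"
  by (cases "k = 0") (simp_all add: field_simps)

lemma sqrt_sq2: "a \<ge> 0 \<Longrightarrow> b \<ge> 0 \<Longrightarrow> sqrt a * sqrt b * (sqrt a * sqrt b) = a * (b::real)"
  by (metis real_sqrt_mult real_sqrt_mult_self abs_of_nonneg mult_nonneg_nonneg)

lemma alg1:
  fixes c r t :: real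
  assumes k: "1 + c > 0" and r: "r * r = c"
  shows "(1 + t * (- c * (2 + c) / (1 + c))) * (1 + t * (c / (1 + c))) - t * (r / (1 + c)) * (t * (r / (1 + c)))
     = 1 - t * (t + 1) * c"
proof -
  have nz: "1 + c \<noteq> 0" using k by auto
  have e1: "1 + t * (- c * (2 + c) / (1 + c)) = (1 + c - t * c * (2 + c)) / (1 + c)"
    using nz by (simp add: field_simps)
  have e2: "1 + t * (c / (1 + c)) = (1 + c + t * c) / (1 + c)"
    using nz by (simp add: field_simps)
  have e3: "t * (r / (1 + c)) * (t * (r / (1 + c))) = t * t * c / ((1 + c) * (1 + c))"
    using r by (simp add: field_simps)
  have e4: "(1 + c - t * c * (2 + c)) / (1 + c) * ((1 + c + t * c) / (1 + c)) - t * t * c / ((1 + c) * (1 + c))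
     = ((1 + c - t * c * (2 + c)) * (1 + c + t * c) - t * t * c) / ((1 + c) * (1 + c))"
    by (rule frac_comb)
  have e5: "(1 + c - t * c * (2 + c)) * (1 + c + t * c) - t * t * c = (1 - t * (t + 1) * c) * ((1 + c) * (1 + c))"
    by (simp add: algebra_simps)
  show ?thesis unfolding e1 e2 e3 e4 e5 using nz by simp
qed

lemma Phat_vals:
  assumes q: "q \<ge> 2"
  shows "Phat_entry q \<mu> q q = \<mu> * (real q / (real q - 1)) / (1 + \<mu> * (real q / (real q - 1)))"
    "Phat_entry q \<mu> (q-1) (q-1) = - (\<mu> * (real q / (real q - 1))) * (2 + \<mu> * (real q / (real q - 1))) / (1 + \<mu> * (real q / (real q - 1)))"
    "Phat_entry q \<mu> (q-1) q = sqrt \<mu> * sqrt (real q / (real q - 1)) / (1 + \<mu> * (real q / (real q - 1)))"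
    "Phat_entry q \<mu> q (q-1) = sqrt \<mu> * sqrt (real q / (real q - 1)) / (1 + \<mu> * (real q / (real q - 1)))"
  using q unfolding Phat_entry_def Let_def by auto

lemma case1:
  fixes q :: nat and \<mu> :: real and t :: real
  assumes q: "q \<ge> 2" and mu: "\<mu> > 0"
  shows "det (1\<^sub>m q + t \<cdot>\<^sub>m Phat q \<mu>) = 1 - \<mu> * t * (t + 1) * (real q / (real q - 1))"
proof -
  define a where "a = q - 2"
  define b where "b = q - 1"
  have ab: "a < q" "b < q" "a \<noteq> b" "a + 1 = q - 1" "b + 1 = q" "Suc a = q - 1" "Suc b = q" using q by (auto simp: a_def b_def)
  define U :: "real mat" where "U = mat q 2 (\<lambda>(i,k). if k = 0 then (if i = a then 1 else 0) else (if i = b then 1 else 0))"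
  define V :: "real mat" where "V = mat 2 q (\<lambda>(k,j). t * Phat_entry q \<mu> (if k = 0 then q - 1 else q) (j+1))"
  have UV: "t \<cdot>\<^sub>m Phat q \<mu> = U * V"
  proof (rule eq_matI)
    fix i j assume i: "i < dim_row (U * V)" and j: "j < dim_col (U * V)"
    have "(U * V) $$ (i, j) = (if i = a then 1 else 0) * (t * Phat_entry q \<mu> (q - 1) (j+1))
       + (if i = b then 1 else 0) * (t * Phat_entry q \<mu> q (j+1))"
      using i j by (simp add: U_def V_def scalar_prod_def numeral_2_eq_2)
    also have "\<dots> = t * Phat_entry q \<mu> (i+1) (j+1)"
    proof (cases "i = a \<or> i = b")
      case False
      then have "Phat_entry q \<mu> (i+1) (j+1) = 0" using ab by (intro Phat_zero) auto
      then show ?thesis using False by auto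
    qed (use ab in auto)
    finally show "(t \<cdot>\<^sub>m Phat q \<mu>) $$ (i, j) = (U * V) $$ (i, j)" using i j
      by (simp add: Phat_def U_def V_def)
  qed (auto simp: U_def V_def Phat_def)
  have VU: "V * U = mat 2 2 (\<lambda>(k,k'). t * Phat_entry q \<mu> (if k = 0 then q - 1 else q) (if k' = 0 then q - 1 else q))"
    by (rule eq_matI, auto simp: U_def V_def scalar_prod_def sum_delta_r' ab cong: if_cong)
  have "det (1\<^sub>m q + t \<cdot>\<^sub>m Phat q \<mu>) = det (1\<^sub>m 2 + V * U)"
    unfolding UV by (rule sylvester, auto simp: U_def V_def)
  also have "1\<^sub>m 2 + V * U = mat 2 2 (\<lambda>(k,k'). (if k = k' then 1 else 0) + t * Phat_entry q \<mu> (if k = 0 then q - 1 else q) (if k' = 0 then q - 1 else q))"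
    unfolding VU by (rule eq_matI, auto)
  also have "det \<dots> = (1 + t * Phat_entry q \<mu> (q-1) (q-1)) * (1 + t * Phat_entry q \<mu> q q)
     - t * Phat_entry q \<mu> (q-1) q * (t * Phat_entry q \<mu> q (q-1))"
    by (simp add: det2)
  also have "\<dots> = 1 - t * (t + 1) * (\<mu> * (real q / (real q - 1)))"
    unfolding Phat_vals[OF q]
  proof (rule alg1)
    have "real q / (real q - 1) > 0" using q by auto
    then show "1 + \<mu> * (real q / (real q - 1)) > 0" using mult_pos_pos[OF mu] by (smt (verit))
    show "sqrt \<mu> * sqrt (real q / (real q - 1)) * (sqrt \<mu> * sqrt (real q / (real q - 1))) = \<mu> * (real q / (real q - 1))"
      using mu \<open>real q / (real q - 1) > 0\<close> by (simp add: sqrt_sq2)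
  qed
  finally show ?thesis by (simp add: mult_ac)
qed
lemma lin2: "(\<Sum>i<q. (x * f i + y * g i) * h i) = x * (\<Sum>i<q. f i * h i) + y * (\<Sum>i<q. g i * h i :: real)"
  by (simp add: sum.distrib sum_distrib_left algebra_simps)
lemma lin1: "(\<Sum>i<q. (x * f i) * h i) = x * (\<Sum>i<q. f i * h i :: real)"
  by (simp add: sum_distrib_left algebra_simps)

lemma case2:
  fixes q :: nat and \<mu> :: real and t :: real
  assumes q: "q \<ge> 2" and mu: "\<mu> > 0" and l: "1 \<le> l" "l \<le> q - 1"
  shows "det (1\<^sub>m q + t \<cdot>\<^sub>m Qhat q \<mu> l) = 1 - \<mu> * t * (t - 1) * ((real q - 2) / (real q - 1))
                  - t^2 * \<mu>^2 * (real q * (real q - 2) / (real q - 1)^2)"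
proof -
  define a where "a = q - 2"
  have ab: "a < q" "Suc a = q - 1" using q by (auto simp: a_def)
  define w where "w = (\<lambda>i. omega q (i+1) l)"
  define da where "da = (\<lambda>i::nat. if i = a then 1 else (0::real))"
  define s where "s = sqrt \<mu> * sqrt (1 + \<mu> * (real q / (real q - 1)))"
  define A where "A = (real q - 2) / (real q - 1)"
  have wa: "w a = 0" using q by (simp add: w_def omega_def a_def)
  have ww: "(\<Sum>i<q. w i * w i) = A" unfolding w_def A_def using ww[OF q l] by simp
  have daw: "(\<Sum>i<q. da i * w i) = 0" "(\<Sum>i<q. w i * da i) = 0" "(\<Sum>i<q. da i * da i) = 1"
    unfolding da_def using ab wa by (simp_all add: sum_delta_l sum_delta_r)
  have Qe: "Qhat_entry q \<mu> l (Suc i) (Suc j) = \<mu> * w i * w j + s * (w i * da j + w j * da i)" for i j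
    unfolding Qhat_entry_def w_def s_def da_def kron_def using ab by (auto simp: a_def)
  define U :: "real mat" where "U = mat q 2 (\<lambda>(i,k). if k = 0 then w i else da i)"
  define V :: "real mat" where "V = mat 2 q (\<lambda>(k,j). if k = 0 then (t * \<mu>) * w j + (t * s) * da j else (t * s) * w j)"
  have UV: "t \<cdot>\<^sub>m Qhat q \<mu> l = U * V"
  proof (rule eq_matI)
    fix i j assume i: "i < dim_row (U * V)" and j: "j < dim_col (U * V)"
    have "(U * V) $$ (i, j) = w i * ((t * \<mu>) * w j + (t * s) * da j) + da i * ((t * s) * w j)"
      using i j by (simp add: U_def V_def scalar_prod_def numeral_2_eq_2)
    then show "(t \<cdot>\<^sub>m Qhat q \<mu> l) $$ (i, j) = (U * V) $$ (i, j)" using i j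
      by (simp add: Qhat_def U_def V_def Qe algebra_simps)
  qed (auto simp: U_def V_def Qhat_def)
  have VU: "V * U = mat 2 2 (\<lambda>(k,k'). if k = 0 then (if k' = 0 then t * \<mu> * A else t * s) else (if k' = 0 then t * s * A else 0))"
    by (rule eq_matI, auto simp: U_def V_def scalar_prod_def atLeast0LessThan lin1 lin2 ww daw)
  have ss: "s * s = \<mu> * (1 + \<mu> * (real q / (real q - 1)))"
    unfolding s_def
  proof (rule sqrt_sq2)
    have "real q / (real q - 1) > 0" using q by auto
    then show "0 \<le> 1 + \<mu> * (real q / (real q - 1))" using mult_pos_pos[OF mu] by (smt (verit))
  qed (use mu in auto)
  have "det (1\<^sub>m q + t \<cdot>\<^sub>m Qhat q \<mu> l) = det (1\<^sub>m 2 + V * U)"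
    unfolding UV by (rule sylvester, auto simp: U_def V_def)
  also have "1\<^sub>m 2 + V * U = mat 2 2 (\<lambda>(k,k'). if k = 0 then (if k' = 0 then 1 + t * \<mu> * A else t * s) else (if k' = 0 then t * s * A else 1))"
    unfolding VU by (rule eq_matI, auto)
  also have "det \<dots> = (1 + t * \<mu> * A) - t * s * (t * s * A)"
    by (simp add: det2)
  also have "\<dots> = (1 + t * \<mu> * A) - t * t * (s * s) * A"
    by (simp add: algebra_simps)
  also have "\<dots> = 1 - \<mu> * t * (t - 1) * ((real q - 2) / (real q - 1))
                  - t^2 * \<mu>^2 * (real q * (real q - 2) / (real q - 1)^2)"
  proof -
    define d where "d = real q - 1"
    have d: "real q = d + 1" "d \<noteq> 0" using q by (auto simp: d_def)
    show ?thesis unfolding ss A_def d(1) using d(2) by (simp add: field_simps power2_eq_square)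
  qed
  finally show ?thesis .
qed




lemma lin2': "(\<Sum>i<q. (x * f i + g i) * h i) = x * (\<Sum>i<q. f i * h i) + (\<Sum>i<q. g i * h i :: real)"
  by (simp add: sum.distrib sum_distrib_left algebra_simps)

lemma alg1':
  fixes c r :: real
  assumes k: "1 + c > 0" and r: "r * r = c"
  shows "(1 + - c * (2 + c) / (1 + c)) * (1 + c / (1 + c)) - r / (1 + c) * (r / (1 + c)) = 1 - 2 * c"
  using alg1[OF k r, of 1] by simp

lemma case3:
  fixes q :: nat and \<mu> :: real
  assumes q: "q \<ge> 2" and mu: "\<mu> > 0" and l: "1 \<le> l" "l \<le> q - 1"
  shows "det (1\<^sub>m q + Phat q \<mu> + Qhat q \<mu> l) = 1 - \<mu> * (2 * real q / (real q - 1))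
                  - \<mu>^2 * (4 * real q * (real q - 2) / (real q - 1)^2)"
proof -
  define a where "a = q - 2"
  define b where "b = q - 1"
  have ab: "a < q" "b < q" "a \<noteq> b" "Suc a = q - 1" "Suc b = q" using q by (auto simp: a_def b_def)
  define w where "w = (\<lambda>i. omega q (i+1) l)"
  define da where "da = (\<lambda>i::nat. if i = a then 1 else (0::real))"
  define db where "db = (\<lambda>i::nat. if i = b then 1 else (0::real))"
  define pa where "pa = (\<lambda>j. Phat_entry q \<mu> (q - 1) (j + 1))"
  define pb where "pb = (\<lambda>j. Phat_entry q \<mu> q (j + 1))"
  define s where "s = sqrt \<mu> * sqrt (1 + \<mu> * (real q / (real q - 1)))"
  define A where "A = (real q - 2) / (real q - 1)"
  define c where "c = \<mu> * (real q / (real q - 1))"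
  have wa: "w a = 0" "w b = 0" using q by (simp_all add: w_def omega_def a_def b_def)
  have ww: "(\<Sum>i<q. w i * w i) = A" unfolding w_def A_def using ww[OF q l] by simp
  have daw: "(\<Sum>i<q. da i * w i) = 0" "(\<Sum>i<q. w i * da i) = 0" "(\<Sum>i<q. da i * da i) = 1"
     "(\<Sum>i<q. w i * db i) = 0" "(\<Sum>i<q. da i * db i) = 0"
     "(\<Sum>i<q. pa i * da i) = Phat_entry q \<mu> (q-1) (q-1)"
     "(\<Sum>i<q. pa i * db i) = Phat_entry q \<mu> (q-1) q"
     "(\<Sum>i<q. pb i * da i) = Phat_entry q \<mu> q (q-1)"
     "(\<Sum>i<q. pb i * db i) = Phat_entry q \<mu> q q"
    unfolding da_def db_def pa_def pb_def using ab wa by (simp_all add: sum_delta_l sum_delta_r)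
  have pw0: "pa i * w i = 0" "pb i * w i = 0" for i
  proof -
    have "pa i = 0 \<and> pb i = 0 \<or> w i = 0"
    proof (cases "i = a \<or> i = b")
      case False
      then have ne: "Suc i \<noteq> q - 1 \<and> Suc i \<noteq> q" using ab by auto
      have "pa i = 0" unfolding pa_def by (rule Phat_zero) (use ne in simp)
      moreover have "pb i = 0" unfolding pb_def by (rule Phat_zero) (use ne in simp)
      ultimately show ?thesis by simp
    qed (use wa in auto)
    then show "pa i * w i = 0" "pb i * w i = 0" by auto
  qed
  have pw: "(\<Sum>i<q. pa i * w i) = 0" "(\<Sum>i<q. pb i * w i) = 0" by (simp_all add: pw0)
  have Qe: "Qhat_entry q \<mu> l (Suc i) (Suc j) = \<mu> * w i * w j + s * (w i * da j + w j * da i)" for i j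
    unfolding Qhat_entry_def w_def s_def da_def kron_def using ab by (auto simp: a_def)
  have Pe: "Phat_entry q \<mu> (Suc i) (Suc j) = da i * pa j + db i * pb j" if "i < q" for i j
  proof (cases "i = a \<or> i = b")
    case False
    then have "Phat_entry q \<mu> (i+1) (j+1) = 0" using ab by (intro Phat_zero) auto
    then show ?thesis using False by (auto simp: da_def db_def)
  qed (use ab in \<open>auto simp: da_def db_def pa_def pb_def\<close>)
  define U :: "real mat" where "U = mat q 3 (\<lambda>(i,k). if k = 0 then w i else if k = 1 then da i else db i)"
  define V :: "real mat" where "V = mat 3 q (\<lambda>(k,j). if k = 0 then \<mu> * w j + s * da j
      else if k = 1 then s * w j + 1 * pa j else 1 * pb j)"
  have UV: "Phat q \<mu> + Qhat q \<mu> l = U * V"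
  proof (rule eq_matI)
    fix i j assume i: "i < dim_row (U * V)" and j: "j < dim_col (U * V)"
    have "(U * V) $$ (i, j) = w i * (\<mu> * w j + s * da j) + da i * (s * w j + 1 * pa j) + db i * (1 * pb j)"
      using i j by (simp add: U_def V_def scalar_prod_def numeral_3_eq_3)
    then show "(Phat q \<mu> + Qhat q \<mu> l) $$ (i, j) = (U * V) $$ (i, j)" using i j
      by (simp add: Qhat_def Phat_def U_def V_def Qe Pe algebra_simps)
  qed (auto simp: U_def V_def Qhat_def Phat_def)
  have VU: "V * U = mat 3 3 (\<lambda>(k,k'). if k = 0 then (if k' = 0 then \<mu> * A else if k' = 1 then s else 0)
      else if k = 1 then (if k' = 0 then s * A else if k' = 1 then Phat_entry q \<mu> (q-1) (q-1) else Phat_entry q \<mu> (q-1) q)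
      else (if k' = 0 then 0 else if k' = 1 then Phat_entry q \<mu> q (q-1) else Phat_entry q \<mu> q q))"
    by (rule eq_matI, auto simp: U_def V_def scalar_prod_def atLeast0LessThan lin1 lin2 lin2' ww daw pw numeral_3_eq_3 less_Suc_eq)
  have ss: "s * s = \<mu> * (1 + c)"
    unfolding s_def c_def
  proof (rule sqrt_sq2)
    have "real q / (real q - 1) > 0" using q by auto
    then show "0 \<le> 1 + \<mu> * (real q / (real q - 1))" using mult_pos_pos[OF mu] by (smt (verit))
  qed (use mu in auto)
  have cpos: "1 + c > 0"
  proof -
    have "real q / (real q - 1) > 0" using q by auto
    then show ?thesis unfolding c_def using mult_pos_pos[OF mu] by (smt (verit))
  qed
  have rr: "sqrt \<mu> * sqrt (real q / (real q - 1)) * (sqrt \<mu> * sqrt (real q / (real q - 1))) = c"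
    unfolding c_def using mu q by (intro sqrt_sq2) auto
  have e: "1\<^sub>m q + Phat q \<mu> + Qhat q \<mu> l = 1\<^sub>m q + (Phat q \<mu> + Qhat q \<mu> l)"
    by (rule assoc_add_mat) (auto simp: Phat_def Qhat_def)
  have "det (1\<^sub>m q + Phat q \<mu> + Qhat q \<mu> l) = det (1\<^sub>m 3 + V * U)"
    unfolding e UV by (rule sylvester) (auto simp: U_def V_def)
  also have "1\<^sub>m 3 + V * U = mat 3 3 (\<lambda>(k,k'). if k = 0 then (if k' = 0 then 1 + \<mu> * A else if k' = 1 then s else 0)
      else if k = 1 then (if k' = 0 then s * A else if k' = 1 then 1 + Phat_entry q \<mu> (q-1) (q-1) else Phat_entry q \<mu> (q-1) q)
      else (if k' = 0 then 0 else if k' = 1 then Phat_entry q \<mu> q (q-1) else 1 + Phat_entry q \<mu> q q))"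
    unfolding VU by (rule eq_matI, auto simp: numeral_3_eq_3 less_Suc_eq)
  also have "det \<dots> = (1 + \<mu> * A) * ((1 + Phat_entry q \<mu> (q-1) (q-1)) * (1 + Phat_entry q \<mu> q q)
       - Phat_entry q \<mu> (q-1) q * Phat_entry q \<mu> q (q-1)) - s * A * (s * (1 + Phat_entry q \<mu> q q))"
    by (simp add: det3)
  also have "\<dots> = (1 + \<mu> * A) * (1 - 2 * c) - (s * s) * A * ((1 + 2 * c) / (1 + c))"
  proof -
    have "(1 + Phat_entry q \<mu> (q-1) (q-1)) * (1 + Phat_entry q \<mu> q q)
       - Phat_entry q \<mu> (q-1) q * Phat_entry q \<mu> q (q-1) = 1 - 2 * c"
      unfolding Phat_vals[OF q] c_def[symmetric] using alg1'[OF cpos rr] by simp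
    moreover have "1 + Phat_entry q \<mu> q q = (1 + 2 * c) / (1 + c)"
      unfolding Phat_vals[OF q] c_def[symmetric] using cpos by (simp add: field_simps)
    ultimately show ?thesis by simp
  qed
  also have "(s * s) * A * ((1 + 2 * c) / (1 + c)) = \<mu> * A * (1 + 2 * c)"
    unfolding ss using cpos by (simp add: field_simps)
  also have "(1 + \<mu> * A) * (1 - 2 * c) - \<mu> * A * (1 + 2 * c) = 1 - \<mu> * (2 * real q / (real q - 1))
                  - \<mu>^2 * (4 * real q * (real q - 2) / (real q - 1)^2)"
  proof -
    define d where "d = real q - 1"
    have d: "real q = d + 1" "d \<noteq> 0" using q by (auto simp: d_def)
    show ?thesis unfolding A_def c_def d(1) using d(2) by (simp add: field_simps power2_eq_square)
  qed
  finally show ?thesis .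
qed


lemma case4:
  fixes q :: nat and \<mu> :: real
  assumes q: "q \<ge> 2" and mu: "\<mu> > 0" and l: "1 \<le> l" "l \<le> q - 1" and l': "1 \<le> l'" "l' \<le> q - 1"
    and ll: "l \<noteq> l'"
  shows "det (1\<^sub>m q + Qhat q \<mu> l + Qhat q \<mu> l')
              = 1 + \<mu> * (2 / (real q - 1))
                  - \<mu>^2 * ((3 * real q - 1) * (real q - 3) / (real q - 1)^2)
                  - \<mu>^3 * (2 * real q * (real q - 3) / (real q - 1)^2)"
proof -
  define a where "a = q - 2"
  have ab: "a < q" "Suc a = q - 1" using q by (auto simp: a_def)
  define w where "w = (\<lambda>i. omega q (i+1) l)"
  define w' where "w' = (\<lambda>i. omega q (i+1) l')"
  define da where "da = (\<lambda>i::nat. if i = a then 1 else (0::real))"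
  define s where "s = sqrt \<mu> * sqrt (1 + \<mu> * (real q / (real q - 1)))"
  define A where "A = (real q - 2) / (real q - 1)"
  define B where "B = - 1 / (real q - 1)"
  define c where "c = \<mu> * (real q / (real q - 1))"
  have wa: "w a = 0" "w' a = 0" using q by (simp_all add: w_def w'_def omega_def a_def)
  have ww: "(\<Sum>i<q. w i * w i) = A" "(\<Sum>i<q. w' i * w' i) = A" "(\<Sum>i<q. w i * w' i) = B" "(\<Sum>i<q. w' i * w i) = B"
    unfolding w_def w'_def A_def B_def using ww[OF q l] ww[OF q l'] ww'[OF q l l' ll] ww'[OF q l' l] ll by simp_all
  have daw: "(\<Sum>i<q. da i * w i) = 0" "(\<Sum>i<q. w i * da i) = 0" "(\<Sum>i<q. da i * da i) = 1"
     "(\<Sum>i<q. da i * w' i) = 0" "(\<Sum>i<q. w' i * da i) = 0"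
    unfolding da_def using ab wa by (simp_all add: sum_delta_l sum_delta_r)
  have Qe: "Qhat_entry q \<mu> l (Suc i) (Suc j) = \<mu> * w i * w j + s * (w i * da j + w j * da i)" for i j
    unfolding Qhat_entry_def w_def s_def da_def kron_def using ab by (auto simp: a_def)
  have Qe': "Qhat_entry q \<mu> l' (Suc i) (Suc j) = \<mu> * w' i * w' j + s * (w' i * da j + w' j * da i)" for i j
    unfolding Qhat_entry_def w'_def s_def da_def kron_def using ab by (auto simp: a_def)
  define U :: "real mat" where "U = mat q 3 (\<lambda>(i,k). if k = 0 then w i else if k = 1 then w' i else da i)"
  define V :: "real mat" where "V = mat 3 q (\<lambda>(k,j). if k = 0 then \<mu> * w j + s * da j
      else if k = 1 then \<mu> * w' j + s * da j else s * w j + s * w' j)"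
  have UV: "Qhat q \<mu> l + Qhat q \<mu> l' = U * V"
  proof (rule eq_matI)
    fix i j assume i: "i < dim_row (U * V)" and j: "j < dim_col (U * V)"
    have "(U * V) $$ (i, j) = w i * (\<mu> * w j + s * da j) + w' i * (\<mu> * w' j + s * da j) + da i * (s * w j + s * w' j)"
      using i j by (simp add: U_def V_def scalar_prod_def numeral_3_eq_3)
    then show "(Qhat q \<mu> l + Qhat q \<mu> l') $$ (i, j) = (U * V) $$ (i, j)" using i j
      by (simp add: Qhat_def U_def V_def Qe Qe' algebra_simps)
  qed (auto simp: U_def V_def Qhat_def)
  have VU: "V * U = mat 3 3 (\<lambda>(k,k'). if k = 0 then (if k' = 0 then \<mu> * A else if k' = 1 then \<mu> * B else s)
      else if k = 1 then (if k' = 0 then \<mu> * B else if k' = 1 then \<mu> * A else s)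
      else (if k' = 0 then s * A + s * B else if k' = 1 then s * B + s * A else 0))"
    by (rule eq_matI, auto simp: U_def V_def scalar_prod_def atLeast0LessThan lin1 lin2 ww daw numeral_3_eq_3 less_Suc_eq)
  have ss: "s * s = \<mu> * (1 + c)"
    unfolding s_def c_def
  proof (rule sqrt_sq2)
    have "real q / (real q - 1) > 0" using q by auto
    then show "0 \<le> 1 + \<mu> * (real q / (real q - 1))" using mult_pos_pos[OF mu] by (smt (verit))
  qed (use mu in auto)
  have e: "1\<^sub>m q + Qhat q \<mu> l + Qhat q \<mu> l' = 1\<^sub>m q + (Qhat q \<mu> l + Qhat q \<mu> l')"
    by (rule assoc_add_mat) (auto simp: Qhat_def)
  have "det (1\<^sub>m q + Qhat q \<mu> l + Qhat q \<mu> l') = det (1\<^sub>m 3 + V * U)"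
    unfolding e UV by (rule sylvester) (auto simp: U_def V_def)
  also have "1\<^sub>m 3 + V * U = mat 3 3 (\<lambda>(k,k'). if k = 0 then (if k' = 0 then 1 + \<mu> * A else if k' = 1 then \<mu> * B else s)
      else if k = 1 then (if k' = 0 then \<mu> * B else if k' = 1 then 1 + \<mu> * A else s)
      else (if k' = 0 then s * A + s * B else if k' = 1 then s * B + s * A else 1))"
    unfolding VU by (rule eq_matI, auto simp: numeral_3_eq_3 less_Suc_eq)
  also have "det \<dots> = (1 + \<mu> * A) * ((1 + \<mu> * A) - (s * s) * (A + B)) - \<mu> * B * (\<mu> * B - (s * s) * (A + B))
      + (s * s) * (A + B) * (\<mu> * B - (1 + \<mu> * A))"
    by (simp add: det3 algebra_simps)
  also have "\<dots> = 1 + \<mu> * (2 / (real q - 1))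
                  - \<mu>^2 * ((3 * real q - 1) * (real q - 3) / (real q - 1)^2)
                  - \<mu>^3 * (2 * real q * (real q - 3) / (real q - 1)^2)"
  proof -
    define d where "d = real q - 1"
    have d: "real q = d + 1" "d \<noteq> 0" using q by (auto simp: d_def)
    show ?thesis unfolding ss A_def B_def c_def d(1) using d(2) by (simp add: field_simps power2_eq_square power3_eq_cube)
  qed
  finally show ?thesis .
qed

theorem proposition1:
  fixes q :: nat and \<mu> :: real
  assumes "q \<ge> 2" and "\<mu> > 0"
  shows "(\<forall>t::nat. det (1\<^sub>m q + real t \<cdot>\<^sub>m Phat q \<mu>)
              = 1 - \<mu> * real t * (real t + 1) * (real q / (real q - 1)))
    \<and> (\<forall>t::nat. \<forall>l\<in>{1..q-1}. det (1\<^sub>m q + real t \<cdot>\<^sub>m Qhat q \<mu> l)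
              = 1 - \<mu> * real t * (real t - 1) * ((real q - 2) / (real q - 1))
                  - (real t)^2 * \<mu>^2 * (real q * (real q - 2) / (real q - 1)^2))
    \<and> (\<forall>l\<in>{1..q-1}. det (1\<^sub>m q + Phat q \<mu> + Qhat q \<mu> l)
              = 1 - \<mu> * (2 * real q / (real q - 1))
                  - \<mu>^2 * (4 * real q * (real q - 2) / (real q - 1)^2))
    \<and> (\<forall>l\<in>{1..q-1}. \<forall>l'\<in>{1..q-1}. l \<noteq> l' \<longrightarrow>
          det (1\<^sub>m q + Qhat q \<mu> l + Qhat q \<mu> l')
              = 1 + \<mu> * (2 / (real q - 1))
                  - \<mu>^2 * ((3 * real q - 1) * (real q - 3) / (real q - 1)^2)
                  - \<mu>^3 * (2 * real q * (real q - 3) / (real q - 1)^2))"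
proof (intro conjI ballI allI impI)
  fix t :: nat
  show "det (1\<^sub>m q + real t \<cdot>\<^sub>m Phat q \<mu>) = 1 - \<mu> * real t * (real t + 1) * (real q / (real q - 1))"
    by (rule case1[OF assms])
next
  fix t :: nat and l assume "l \<in> {1..q-1}"
  then show "det (1\<^sub>m q + real t \<cdot>\<^sub>m Qhat q \<mu> l)
              = 1 - \<mu> * real t * (real t - 1) * ((real q - 2) / (real q - 1))
                  - (real t)^2 * \<mu>^2 * (real q * (real q - 2) / (real q - 1)^2)"
    using case2[OF assms] by auto
next
  fix l assume "l \<in> {1..q-1}"
  then show "det (1\<^sub>m q + Phat q \<mu> + Qhat q \<mu> l)
              = 1 - \<mu> * (2 * real q / (real q - 1))
                  - \<mu>^2 * (4 * real q * (real q - 2) / (real q - 1)^2)"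
    using case3[OF assms] by auto
next
  fix l l' assume "l \<in> {1..q-1}" "l' \<in> {1..q-1}" "l \<noteq> l'"
  then show "det (1\<^sub>m q + Qhat q \<mu> l + Qhat q \<mu> l')
              = 1 + \<mu> * (2 / (real q - 1))
                  - \<mu>^2 * ((3 * real q - 1) * (real q - 3) / (real q - 1)^2)
                  - \<mu>^3 * (2 * real q * (real q - 3) / (real q - 1)^2)"
    using case4[OF assms] by auto
qed

end
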